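(* Let $S$ be an inverse semigroup that is a separately Scott-continuous mirror semigroup, with semilattice of idempotents $\Sigma$. Then for all $\epsilon,\delta\in\Sigma$, $\epsilon \prec\!\!\!\prec \delta$ if and only if $\epsilon\ll\delta$.
   Context: An inverse semigroup is a semigroup $S$ in which every $s$ has a unique $s^*$ with $ss^*s=s$ and $s^*ss^*=s^*$. $\Sigma=\Sigma(S)$ is the set of idempotents. The intrinsic order is $s\leqslant t$ iff $s=t\epsilon$ for some idempotent $\epsilon$. A subset is directed if nonempty and any two elements have an upper bound in it. $S$ is a mirror semigroup if every directed subset of $\Sigma$ having a supremum in $(\Sigma,\leqslant)$ also has a supremum in $(S,\leqslant)$. $S$ is separately Scott-continuous if for every directed $D\subseteq S$ with a supremum $\bigvee D$ in $S$ and every $s\in S$, $\bigvee(Ds)$ exists in $S$ and equals $(\bigvee D)s$. In a poset, $x$ is way-below $y$ if for every directed subset $D$ that has a supremum with $y\leqslant \sup D$, there is $d\in D$ with $x\leqslant d$. $\ll$ denotes the way-below relation of the poset $(S,\leqslant)$ and $\prec\!\!\!\prec$ the way-below relation of the poset $(\Sigma,\leqslant)$. *)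

theory Defs
  imports Main
begin

definition inverse_semigroup :: "'a::semigroup_mult itself \<Rightarrow> bool" where
  "inverse_semigroup _ \<longleftrightarrow> (\<forall>s::'a. \<exists>!t. s * t * s = s \<and> t * s * t = t)"

definition idems :: "'a::semigroup_mult set" where
  "idems = {e. e * e = e}"

definition nat_le :: "'a::semigroup_mult \<Rightarrow> 'a \<Rightarrow> bool" where
  "nat_le s t \<longleftrightarrow> (\<exists>e\<in>idems. s = t * e)"

definition is_ub :: "('a \<Rightarrow> 'a \<Rightarrow> bool) \<Rightarrow> 'a set \<Rightarrow> 'a set \<Rightarrow> 'a \<Rightarrow> bool" where
  "is_ub le P D u \<longleftrightarrow> u \<in> P \<and> (\<forall>d\<in>D. le d u)"

definition is_sup :: "('a \<Rightarrow> 'a \<Rightarrow> bool) \<Rightarrow> 'a set \<Rightarrow> 'a set \<Rightarrow> 'a \<Rightarrow> bool" where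
  "is_sup le P D x \<longleftrightarrow> is_ub le P D x \<and> (\<forall>u. is_ub le P D u \<longrightarrow> le x u)"

definition directed :: "('a \<Rightarrow> 'a \<Rightarrow> bool) \<Rightarrow> 'a set \<Rightarrow> bool" where
  "directed le D \<longleftrightarrow> D \<noteq> {} \<and> (\<forall>a\<in>D. \<forall>b\<in>D. \<exists>c\<in>D. le a c \<and> le b c)"

definition way_below :: "('a \<Rightarrow> 'a \<Rightarrow> bool) \<Rightarrow> 'a set \<Rightarrow> 'a \<Rightarrow> 'a \<Rightarrow> bool" where
  "way_below le P x y \<longleftrightarrow>
     (\<forall>D s. D \<subseteq> P \<and> directed le D \<and> is_sup le P D s \<and> le y s \<longrightarrow> (\<exists>d\<in>D. le x d))"

definition mirror_semigroup :: "'a::semigroup_mult itself \<Rightarrow> bool" where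
  "mirror_semigroup _ \<longleftrightarrow>
     (\<forall>D::'a set. D \<subseteq> idems \<and> directed nat_le D \<and> (\<exists>x. is_sup nat_le idems D x)
        \<longrightarrow> (\<exists>y. is_sup nat_le UNIV D y))"

definition sep_scott_continuous :: "'a::semigroup_mult itself \<Rightarrow> bool" where
  "sep_scott_continuous _ \<longleftrightarrow>
     (\<forall>(D::'a set) x s. directed nat_le D \<and> is_sup nat_le UNIV D x
        \<longrightarrow> is_sup nat_le UNIV ((\<lambda>d. d * s) ` D) (x * s))"

end

theory Submission
  imports Defs
begin

definition iv :: "'a::semigroup_mult \<Rightarrow> 'a" where
  "iv s = (THE t. s*t*s = s \<and> t*s*t = t)"

context
  fixes T :: "'a::semigroup_mult itself"
  assumes IS: "inverse_semigroup TYPE('a)"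
begin

lemma iv_ok: "(s::'a) * iv s * s = s \<and> iv s * s * iv s = iv s"
proof -
  have "\<exists>!t. s * t * s = s \<and> t * s * t = t" using IS unfolding inverse_semigroup_def by blast
  thus ?thesis unfolding iv_def by (rule theI')
qed

lemma iv1: "(s::'a) * (iv s * s) = s" using iv_ok[of s] by (simp add: mult.assoc)
lemma iv2: "iv (s::'a) * (s * iv s) = iv s" using iv_ok[of s] by (simp add: mult.assoc)

lemma iv_uniq: "(s::'a) * t * s = s \<Longrightarrow> t * s * t = t \<Longrightarrow> t = iv s"
proof -
  assume a: "s * t * s = s" "t * s * t = t"
  have "\<exists>!t. s * t * s = s \<and> t * s * t = t" using IS unfolding inverse_semigroup_def by blast
  thus ?thesis using a iv_ok[of s] by blast
qed

lemma iv_iv: "iv (iv (s::'a)) = s"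
  using iv_uniq[of "iv s" s] iv_ok[of s] by simp

lemma iv_idem: "(e::'a) \<in> idems \<Longrightarrow> iv e = e"
  unfolding idems_def using iv_uniq[of e e] by (simp add: mult.assoc)

lemma idem_mult: assumes "(e::'a) \<in> idems" "f \<in> idems" shows "e * f \<in> idems"
proof -
  have ee: "e*e = e" and ff: "f*f = f" using assms unfolding idems_def by auto
  have ee': "e*(e*z) = e*z" for z using ee by (metis mult.assoc)
  have ff': "f*(f*z) = f*z" for z using ff by (metis mult.assoc)
  define x where "x = iv (e*f)"
  have x1: "e*f*x*(e*f) = e*f" and x2: "x*(e*f)*x = x" using iv_ok[of "e*f"] x_def by auto
  have "f*x*e = x"
  proof -
    have "(e*f)*(f*x*e)*(e*f) = e*f*x*(e*f)" using ee' ff' by (simp add: mult.assoc)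
    hence a: "(e*f)*(f*x*e)*(e*f) = e*f" using x1 by simp
    have "(f*x*e)*(e*f)*(f*x*e) = f*(x*(e*f)*x)*e" using ee' ff' by (simp add: mult.assoc)
    hence b: "(f*x*e)*(e*f)*(f*x*e) = f*x*e" using x2 by simp
    show ?thesis using iv_uniq[OF a b] x_def by simp
  qed
  hence "x*x = x"
  proof -
    assume h: "f*x*e = x"
    have "x*x = (f*x*e)*(f*x*e)" using h by simp
    also have "\<dots> = f*(x*(e*f)*x)*e" by (simp add: mult.assoc)
    finally have "x*x = f*(x*(e*f)*x)*e" .
    also have "\<dots> = x" using x2 h by (simp add: mult.assoc)
    finally show ?thesis .
  qed
  hence "iv x = x" using iv_idem unfolding idems_def by auto
  hence "e*f = x" using iv_iv[of "e*f"] x_def by simp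
  thus ?thesis using \<open>x*x=x\<close> unfolding idems_def by simp
qed

lemma idem_comm: assumes "(e::'a) \<in> idems" "f \<in> idems" shows "e * f = f * e"
proof -
  have ee: "e*e = e" and ff: "f*f = f" using assms unfolding idems_def by auto
  have ef: "e*f*(e*f) = e*f" and fe: "f*e*(f*e) = f*e"
    using idem_mult[OF assms] idem_mult[OF assms(2,1)] unfolding idems_def by auto
  have ee': "e*(e*z) = e*z" for z using ee by (metis mult.assoc)
  have ff': "f*(f*z) = f*z" for z using ff by (metis mult.assoc)
  have a: "(e*f)*(f*e)*(e*f) = e*f" using ee' ff' ef by (simp add: mult.assoc)
  have b: "(f*e)*(e*f)*(f*e) = f*e" using ee' ff' fe by (simp add: mult.assoc)
  have "f*e = iv (e*f)" using iv_uniq[OF a b] .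
  also have "\<dots> = e*f" using iv_idem idem_mult[OF assms] by simp
  finally show ?thesis by simp
qed

lemma ivs_idem: "iv (s::'a) * s \<in> idems"
  unfolding idems_def using iv1[of s] by (simp add: mult.assoc)
lemma sivs_idem: "(s::'a) * iv s \<in> idems"
  unfolding idems_def using iv2[of s] by (simp add: mult.assoc)

lemma iv_mult: "iv ((a::'a) * b) = iv b * iv a"
proof -
  have c: "(b * iv b) * (iv a * a) = (iv a * a) * (b * iv b)"
    using idem_comm[OF sivs_idem ivs_idem] .
  have p: "(a*b)*(iv b*iv a)*(a*b) = a*b"
  proof -
    have "(a*b)*(iv b*iv a)*(a*b) = a*((b*iv b)*(iv a*a))*b" by (simp add: mult.assoc)
    also have "\<dots> = a*((iv a*a)*(b*iv b))*b" using c by simp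
    also have "\<dots> = (a*iv a*a)*(b*iv b*b)" by (simp add: mult.assoc)
    finally show ?thesis using iv_ok by simp
  qed
  have q: "(iv b*iv a)*(a*b)*(iv b*iv a) = iv b*iv a"
  proof -
    have "(iv b*iv a)*(a*b)*(iv b*iv a) = iv b*((iv a*a)*(b*iv b))*iv a" by (simp add: mult.assoc)
    also have "\<dots> = iv b*((b*iv b)*(iv a*a))*iv a" using c by simp
    also have "\<dots> = (iv b*b*iv b)*(iv a*a*iv a)" by (simp add: mult.assoc)
    finally show ?thesis using iv_ok by simp
  qed
  show ?thesis using iv_uniq[OF p q] by simp
qed

lemma le_refl: "nat_le (s::'a) s"
  unfolding nat_le_def using ivs_idem iv1[of s] by metis

lemma le_trans: "nat_le (s::'a) t \<Longrightarrow> nat_le t u \<Longrightarrow> nat_le s u"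
  unfolding nat_le_def
proof -
  assume "\<exists>e\<in>idems. s = t * e" "\<exists>e\<in>idems. t = u * e"
  then obtain e f where "e \<in> idems" "s = t*e" "f \<in> idems" "t = u*f" by auto
  thus "\<exists>e\<in>idems. s = u * e" using idem_mult[of f e] by (auto simp: mult.assoc)
qed

lemma le_antisym: assumes "nat_le (s::'a) t" "nat_le t s" shows "s = t"
proof -
  obtain e f where e: "e \<in> idems" "s = t*e" and f: "f \<in> idems" "t = s*f"
    using assms unfolding nat_le_def by auto
  have ee: "e*e = e" using e unfolding idems_def by auto
  have se: "s*e = s" using e ee by (simp add: mult.assoc)
  have "t*e = s*f*e" using f by simp
  also have "\<dots> = s*e*f" using idem_comm[OF e(1) f(1)] by (simp add: mult.assoc)
  also have "\<dots> = t" using se f by simp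
  finally show ?thesis using e by simp
qed

lemma le_key: assumes "g \<in> idems" "(x::'a) = t * g" shows "x = t * (iv x * x)"
proof -
  have gg: "g*g = g" and ig: "iv g = g" using assms iv_idem unfolding idems_def by auto
  have "iv x * x = g * iv t * t * g" using assms iv_mult ig by (simp add: mult.assoc)
  also have "\<dots> = (iv t * t) * g * g" using idem_comm[OF assms(1) ivs_idem[of t]] by (simp add: mult.assoc)
  also have "\<dots> = iv t * t * g" using gg by (simp add: mult.assoc)
  finally have "t * (iv x * x) = (t * iv t * t) * g" by (simp add: mult.assoc)
  thus ?thesis using iv_ok assms by simp
qed

lemma le_idem: assumes "nat_le (x::'a) s" "s \<in> idems" shows "x \<in> idems"
proof -
  obtain g where "g \<in> idems" "x = s*g" using assms(1) unfolding nat_le_def by auto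
  thus ?thesis using idem_mult[OF assms(2), of g] by simp
qed

lemma idem_below: assumes "(e::'a) \<in> idems" "nat_le e s" shows "s * e = e"
proof -
  obtain g where "g \<in> idems" "e = s*g" using assms unfolding nat_le_def by auto
  hence "e = s * (iv e * e)" by (rule le_key)
  thus ?thesis using iv_idem[OF assms(1)] assms(1) unfolding idems_def by simp
qed

end

theorem corollary4p5:
  assumes "inverse_semigroup TYPE('a::semigroup_mult)"
    and "mirror_semigroup TYPE('a)"
    and "sep_scott_continuous TYPE('a)"
    and "e \<in> (idems :: 'a set)" and "d \<in> idems"
  shows "way_below nat_le idems e d \<longleftrightarrow> way_below nat_le (UNIV :: 'a set) e d"
proof
  assume W: "way_below nat_le idems e d"
  show "way_below nat_le (UNIV :: 'a set) e d"
    unfolding way_below_def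
  proof (intro allI impI)
    fix D :: "'a set" and s
    assume H: "D \<subseteq> UNIV \<and> directed nat_le D \<and> is_sup nat_le UNIV D s \<and> nat_le d s"
    have dd: "d*d = d" using assms(5) unfolding idems_def by auto
    have sd: "s*d = d" using idem_below[OF assms(1) assms(5)] H by blast
    have sup: "is_sup nat_le UNIV ((\<lambda>x. x*d) ` D) d"
    proof -
      have "is_sup nat_le UNIV ((\<lambda>x. x*d) ` D) (s*d)"
        using assms(3) H unfolding sep_scott_continuous_def by blast
      thus ?thesis using sd by simp
    qed
    have sub: "(\<lambda>x. x*d) ` D \<subseteq> idems"
    proof
      fix y assume "y \<in> (\<lambda>x. x*d) ` D"
      then obtain x where x: "x \<in> D" "y = x*d" by auto
      have "nat_le x s" using H x unfolding is_sup_def is_ub_def by auto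
      then obtain g where "g \<in> idems" "x = s*g" unfolding nat_le_def by auto
      hence xx: "x = s * (iv x * x)" using le_key[OF assms(1)] by blast
      have cm: "(iv x * x) * d = d * (iv x * x)"
        using idem_comm[OF assms(1) ivs_idem[OF assms(1), of x] assms(5)] .
      have "y = s * (iv x * x) * d" using x xx by simp
      also have "\<dots> = s * ((iv x * x) * d)" by (simp add: mult.assoc)
      also have "\<dots> = s * d * (iv x * x)" using cm by (simp add: mult.assoc)
      finally have "y = s * d * (iv x * x)" .
      hence "y = d * (iv x * x)" using sd by simp
      thus "y \<in> idems" using idem_mult[OF assms(1) assms(5) ivs_idem[OF assms(1)]] by simp
    qed
    have dir: "directed nat_le ((\<lambda>x. x*d) ` D)"
      unfolding directed_def
    proof (intro conjI ballI)
      show "(\<lambda>x. x*d) ` D \<noteq> {}" using H unfolding directed_def by auto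
    next
      fix a b assume a: "a \<in> (\<lambda>x. x*d) ` D" and b: "b \<in> (\<lambda>x. x*d) ` D"
      then obtain x y where xy: "x \<in> D" "y \<in> D" "a = x*d" "b = y*d" by auto
      then obtain z where z: "z \<in> D" "nat_le x z" "nat_le y z"
        using H unfolding directed_def by blast
      have mono: "nat_le (u*d) (z*d)" if hu: "nat_le u z" for u
      proof -
        obtain g where g: "g \<in> idems" "u = z*g" using hu unfolding nat_le_def by auto
        have "u*d = z*d*g" using g idem_comm[OF assms(1) g(1) assms(5)] by (simp add: mult.assoc)
        thus ?thesis unfolding nat_le_def using g by auto
      qed
      show "\<exists>c\<in>(\<lambda>x. x*d) ` D. nat_le a c \<and> nat_le b c"
        using z mono xy by blast
    qed
    have sup2: "is_sup nat_le idems ((\<lambda>x. x*d) ` D) d"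
      using sup assms(5) unfolding is_sup_def is_ub_def by auto
    have "\<exists>y\<in>(\<lambda>x. x*d) ` D. nat_le e y"
      using W sub dir sup2 le_refl[OF assms(1), of d] unfolding way_below_def by blast
    then obtain y where y: "y \<in> (\<lambda>x. x*d) ` D" "nat_le e y" by blast
    then obtain x where x: "x \<in> D" "y = x*d" by auto
    have "nat_le y x" using x assms(5) unfolding nat_le_def by auto
    thus "\<exists>x\<in>D. nat_le e x" using x y le_trans[OF assms(1)] by blast
  qed
next
  assume W: "way_below nat_le (UNIV :: 'a set) e d"
  show "way_below nat_le idems e d"
    unfolding way_below_def
  proof (intro allI impI)
    fix D :: "'a set" and s
    assume H: "D \<subseteq> idems \<and> directed nat_le D \<and> is_sup nat_le idems D s \<and> nat_le d s"
    obtain y where y: "is_sup nat_le UNIV D y"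
      using assms(2) H unfolding mirror_semigroup_def by blast
    have sI: "s \<in> idems" using H unfolding is_sup_def is_ub_def by auto
    have ys: "nat_le y s" using y H unfolding is_sup_def is_ub_def by auto
    have yI: "y \<in> idems" using le_idem[OF assms(1) ys sI] .
    have sy: "nat_le s y" using H y yI unfolding is_sup_def is_ub_def by auto
    have "y = s" using le_antisym[OF assms(1) ys sy] .
    thus "\<exists>x\<in>D. nat_le e x" using W H y unfolding way_below_def by blast
  qed
qed

end
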